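(* Let $n\ge 2$ and $m_1,\dots,m_n\ge1$, $m=m_1+\dots+m_n$. Assume: (a) each $h_i:Q_q^{m_i}\to Q_q$ ($i=1,\dots,n$) is an $m_i$-ary iterated group (for a group on $Q_q$ with identity $0$); (b) $f:Q_q^n\to Q_q$ is an isotopically transitive $n$-ary quasigroup, with $G_f$ the autotopy group of its graph $\{(x_0,x_1,\dots,x_n): x_0=f(x_1,\dots,x_n)\}$, whose elements are written $\overline\sigma=(\sigma_0,\sigma_1,\dots,\sigma_n)$; (c) for every $i\in\{1,\dots,n\}$ and every $\overline\sigma\in G_f$ there exists an isotopism $\overline\tau_i$ of $Q_q^{m_i}$ with $h_i(\overline\tau_i\overline z_i)=\sigma_i h_i(\overline z_i)$ for all $\overline z_i\in Q_q^{m_i}$. Then the $m$-ary quasigroup $g(\overline z_1,\dots,\overline z_n)=f(h_1(\overline z_1),\dots,h_n(\overline z_n))$ is isotopically transitive.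
   Context: An $n$-ary quasigroup of order $q$ is a function $f:Q_q^n\to Q_q$ such that $f(\overline x)\ne f(\overline y)$ whenever $\overline x,\overline y$ differ in exactly one coordinate; it is called isotopically transitive if its graph $\{(x_0,\overline x): x_0=f(\overline x)\}\subseteq Q_q^{n+1}$ is isotopically transitive. An $m$-ary iterated group is a function $(z_1,\dots,z_m)\mapsto z_1\circ\cdots\circ z_m$ for a group operation $\circ$ on $Q_q$. An isotopism of $Q_q^N$ is a map $\overline{x}\mapsto(\tau_1x_1,\dots,\tau_Nx_N)$ with $\tau_i$ permutations of $Q_q$; the autotopy group of $A\subseteq Q_q^N$ is the group of isotopisms mapping $A$ onto $A$, and $A$ is isotopically transitive if this group acts transitively on $A$. *)

theory Defs
  imports "HOL-Algebra.Group"
begin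

text \<open>Q_q = {0,...,q-1}; Q_q^N is represented by lists of length N over Q_q,
  coordinates indexed 0..N-1.\<close>

definition Qn :: "nat \<Rightarrow> nat \<Rightarrow> nat list set" where
  "Qn q N = {xs. length xs = N \<and> set xs \<subseteq> {..<q}}"

definition is_quasigroup :: "nat \<Rightarrow> nat \<Rightarrow> (nat list \<Rightarrow> nat) \<Rightarrow> bool" where
  "is_quasigroup q n f \<longleftrightarrow>
     (\<forall>x\<in>Qn q n. f x \<in> {..<q}) \<and>
     (\<forall>x\<in>Qn q n. \<forall>y\<in>Qn q n. card {i. i < n \<and> x ! i \<noteq> y ! i} = 1 \<longrightarrow> f x \<noteq> f y)"

definition isotopism :: "nat \<Rightarrow> nat \<Rightarrow> (nat \<Rightarrow> nat \<Rightarrow> nat) \<Rightarrow> bool" where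
  "isotopism q N \<tau> \<longleftrightarrow> (\<forall>i<N. bij_betw (\<tau> i) {..<q} {..<q})"

definition iso_apply :: "(nat \<Rightarrow> nat \<Rightarrow> nat) \<Rightarrow> nat list \<Rightarrow> nat list" where
  "iso_apply \<tau> xs = map (\<lambda>i. \<tau> i (xs ! i)) [0..<length xs]"

definition autotopy_group :: "nat \<Rightarrow> nat \<Rightarrow> nat list set \<Rightarrow> (nat \<Rightarrow> nat \<Rightarrow> nat) set" where
  "autotopy_group q N A = {\<tau>. isotopism q N \<tau> \<and> iso_apply \<tau> ` A = A}"

definition isotopically_transitive :: "nat \<Rightarrow> nat \<Rightarrow> nat list set \<Rightarrow> bool" where
  "isotopically_transitive q N A \<longleftrightarrow>
     (\<forall>x\<in>A. \<forall>y\<in>A. \<exists>\<tau>\<in>autotopy_group q N A. iso_apply \<tau> x = y)"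

definition qgraph :: "nat \<Rightarrow> nat \<Rightarrow> (nat list \<Rightarrow> nat) \<Rightarrow> nat list set" where
  "qgraph q n f = {f xs # xs | xs. xs \<in> Qn q n}"

definition iso_transitive_quasigroup :: "nat \<Rightarrow> nat \<Rightarrow> (nat list \<Rightarrow> nat) \<Rightarrow> bool" where
  "iso_transitive_quasigroup q n f \<longleftrightarrow>
     is_quasigroup q n f \<and> isotopically_transitive q (n + 1) (qgraph q n f)"

definition iterated_group :: "nat \<Rightarrow> nat \<Rightarrow> (nat list \<Rightarrow> nat) \<Rightarrow> bool" where
  "iterated_group q m h \<longleftrightarrow>
     (\<exists>op. group \<lparr>carrier = {..<q}, mult = op, one = 0\<rparr> \<and>
           (\<forall>zs\<in>Qn q m. h zs = foldr op zs 0))"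

definition compose_qg :: "nat \<Rightarrow> (nat list \<Rightarrow> nat) \<Rightarrow> (nat \<Rightarrow> nat list \<Rightarrow> nat) \<Rightarrow> (nat \<Rightarrow> nat)
    \<Rightarrow> nat list \<Rightarrow> nat" where
  "compose_qg n f h m zs =
     f (map (\<lambda>i. h i (take (m i) (drop (\<Sum>j\<in>{1..<i}. m j) zs))) [1..<n+1])"

end

theory Submission
  imports Defs
begin


context group begin

lemma foldr_closed:
  "set xs \<subseteq> carrier G \<Longrightarrow> c \<in> carrier G \<Longrightarrow> foldr (mult G) xs c \<in> carrier G"
  by (induction xs) auto

lemma foldr_shift:
  "set xs \<subseteq> carrier G \<Longrightarrow> c \<in> carrier G \<Longrightarrow> foldr (mult G) xs c = foldr (mult G) xs \<one> \<otimes> c"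
  by (induction xs) (auto simp: m_assoc foldr_closed)

lemma foldr_snoc:
  "set xs \<subseteq> carrier G \<Longrightarrow> x \<in> carrier G \<Longrightarrow> foldr (mult G) (xs @ [x]) \<one> = foldr (mult G) xs \<one> \<otimes> x"
  using foldr_shift[of xs x] by simp

lemma cancel1: "x \<in> carrier G \<Longrightarrow> z \<in> carrier G \<Longrightarrow> x \<otimes> (inv x \<otimes> z) = z"
  by (simp add: m_assoc[symmetric])

lemma cancel2: "x \<in> carrier G \<Longrightarrow> z \<in> carrier G \<Longrightarrow> inv x \<otimes> (x \<otimes> z) = z"
  by (simp add: m_assoc[symmetric])

lemma bij_transl:
  assumes "a \<in> carrier G" "b \<in> carrier G"
  shows "bij_betw (\<lambda>v. a \<otimes> v \<otimes> b) (carrier G) (carrier G)"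
  by (rule bij_betw_byWitness[where f'="\<lambda>v. inv a \<otimes> v \<otimes> inv b"])
     (use assms in \<open>auto simp: m_assoc cancel1 cancel2\<close>)

lemma foldr_differ:
  assumes u: "set u \<subseteq> carrier G" and v: "set v \<subseteq> carrier G" and len: "length v = length u"
    and p: "p < length u" and oth: "\<forall>j<length u. j \<noteq> p \<longrightarrow> u ! j = v ! j"
    and d: "u ! p \<noteq> v ! p"
  shows "foldr (mult G) u \<one> \<noteq> foldr (mult G) v \<one>"
proof -
  have tk: "take p u = take p v"
    by (rule nth_equalityI) (use len p oth in auto)
  have dr: "drop (Suc p) u = drop (Suc p) v"
    by (rule nth_equalityI) (use len p oth in auto)
  have su: "u = take p u @ u ! p # drop (Suc p) u" by (simp add: id_take_nth_drop p)
  have sv: "v = take p u @ v ! p # drop (Suc p) u" using tk dr len p by (simp add: id_take_nth_drop)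
  have up: "u ! p \<in> carrier G" using u p by auto
  have vp: "v ! p \<in> carrier G" using v p len by (metis nth_mem subsetD)
  have tc: "set (take p u) \<subseteq> carrier G" using u by (meson set_take_subset subset_trans)
  have dc: "set (drop (Suc p) u) \<subseteq> carrier G" using u by (meson set_drop_subset subset_trans)
  define A where "A = foldr (mult G) (take p u) \<one>"
  define B where "B = foldr (mult G) (drop (Suc p) u) \<one>"
  have Ac: "A \<in> carrier G" using tc by (simp add: A_def foldr_closed)
  have Bc: "B \<in> carrier G" using dc by (simp add: B_def foldr_closed)
  have e1: "foldr (mult G) u \<one> = A \<otimes> (u ! p \<otimes> B)"
  proof -
    have "foldr (mult G) u \<one> = foldr (mult G) (take p u) (u ! p \<otimes> B)"
      by (subst su) (simp add: B_def)
    also have "\<dots> = A \<otimes> (u ! p \<otimes> B)" using foldr_shift[OF tc, of "u ! p \<otimes> B"] up Bc by (simp add: A_def)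
    finally show ?thesis .
  qed
  have e2: "foldr (mult G) v \<one> = A \<otimes> (v ! p \<otimes> B)"
  proof -
    have "foldr (mult G) v \<one> = foldr (mult G) (take p u) (v ! p \<otimes> B)"
      by (subst sv) (simp add: B_def)
    also have "\<dots> = A \<otimes> (v ! p \<otimes> B)" using foldr_shift[OF tc, of "v ! p \<otimes> B"] vp Bc by (simp add: A_def)
    finally show ?thesis .
  qed
  show ?thesis unfolding e1 e2 using Ac Bc up vp d by simp
qed

end

lemma Qn_nth: "x \<in> Qn q N \<Longrightarrow> i < N \<Longrightarrow> x ! i < q"
  unfolding Qn_def by (auto dest!: nth_mem)

lemma length_iso[simp]: "length (iso_apply T xs) = length xs"
  by (simp add: iso_apply_def)

lemma nth_iso[simp]: "j < length xs \<Longrightarrow> iso_apply T xs ! j = T j (xs ! j)"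
  by (simp add: iso_apply_def)

lemma iso_cong:
  "(\<And>j. j < length xs \<Longrightarrow> T j (xs ! j) = T' j (xs ! j)) \<Longrightarrow> iso_apply T xs = iso_apply T' xs"
  by (simp add: iso_apply_def)

lemma iso_Cons: "iso_apply T (x # xs) = T 0 x # iso_apply (\<lambda>k. T (Suc k)) xs"
  by (rule nth_equalityI) (auto simp: nth_Cons split: nat.splits)

lemma iso_Qn:
  assumes "isotopism q N T" "x \<in> Qn q N"
  shows "iso_apply T x \<in> Qn q N"
proof -
  have "\<And>k. k < N \<Longrightarrow> T k (x ! k) < q"
  proof -
    fix k assume k: "k < N"
    have "x ! k \<in> {..<q}" using Qn_nth[OF assms(2) k] by simp
    then have "T k (x ! k) \<in> T k ` {..<q}" by blast
    then show "T k (x ! k) < q" using assms(1) k unfolding isotopism_def bij_betw_def by auto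
  qed
  then show ?thesis using assms(2) unfolding Qn_def by (auto simp: in_set_conv_nth)
qed

lemma iso_inj:
  assumes "isotopism q N T"
  shows "inj_on (iso_apply T) (Qn q N)"
proof
  fix x y assume x: "x \<in> Qn q N" and y: "y \<in> Qn q N" and e: "iso_apply T x = iso_apply T y"
  show "x = y"
  proof (rule nth_equalityI)
    show "length x = length y" using x y by (simp add: Qn_def)
    fix k assume k: "k < length x"
    hence kN: "k < N" using x by (simp add: Qn_def)
    have "T k (x ! k) = T k (y ! k)" using e k kN x y
      by (metis Qn_def length_iso mem_Collect_eq nth_iso)
    moreover have "inj_on (T k) {..<q}" using assms kN by (simp add: isotopism_def bij_betw_def)
    ultimately show "x ! k = y ! k" using Qn_nth[OF x kN] Qn_nth[OF y kN]
      by (simp add: inj_on_def)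
  qed
qed

lemma finite_Qn: "finite (Qn q N)"
proof -
  have "Qn q N = {xs. set xs \<subseteq> {..<q} \<and> length xs = N}" by (auto simp: Qn_def)
  then show ?thesis using finite_lists_length_eq[of "{..<q}" N] by simp
qed



definition off :: "(nat \<Rightarrow> nat) \<Rightarrow> nat \<Rightarrow> nat" where
  "off m i = (\<Sum>j\<in>{1..<i}. m j)"

definition blk :: "(nat \<Rightarrow> nat) \<Rightarrow> nat \<Rightarrow> nat list \<Rightarrow> nat list" where
  "blk m i zs = take (m i) (drop (off m i) zs)"

definition bo :: "(nat \<Rightarrow> nat) \<Rightarrow> nat \<Rightarrow> nat" where
  "bo m k = (LEAST i. k < off m (Suc i))"

lemma compose_blk: "compose_qg n f h m zs = f (map (\<lambda>i. h i (blk m i zs)) [1..<n+1])"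
  by (simp add: compose_qg_def blk_def off_def)

lemma off_Suc: "1 \<le> i \<Longrightarrow> off m (Suc i) = off m i + m i"
  by (simp add: off_def sum.atLeastLessThan_Suc)

lemma off_1[simp]: "off m (Suc 0) = 0" by (simp add: off_def)

lemma off_n: "off m (Suc n) = (\<Sum>i=1..n. m i)"
  by (simp add: off_def atLeastLessThanSuc_atLeastAtMost)

lemma off_mono: "a \<le> b \<Longrightarrow> off m a \<le> off m b"
  unfolding off_def by (rule sum_mono2) auto

lemma length_blk: "length (blk m i zs) = min (m i) (length zs - off m i)"
  by (simp add: blk_def)

lemma nth_blk: "j < length (blk m i zs) \<Longrightarrow> blk m i zs ! j = zs ! (off m i + j)"
proof -
  assume j: "j < length (blk m i zs)"
  then have "off m i \<le> length zs" by (simp add: length_blk) arith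
  then show ?thesis using j by (simp add: blk_def length_blk)
qed

lemma blk_iso: "blk m i (iso_apply T zs) = iso_apply (\<lambda>j. T (off m i + j)) (blk m i zs)"
  by (rule nth_equalityI) (auto simp: length_blk nth_blk)

lemma bo_props:
  assumes "k < off m (Suc n)"
  shows "1 \<le> bo m k \<and> bo m k \<le> n \<and> off m (bo m k) \<le> k \<and> k < off m (Suc (bo m k))"
proof -
  have L: "k < off m (Suc (bo m k))" unfolding bo_def by (rule LeastI[of _ n]) (rule assms)
  have le: "bo m k \<le> n" unfolding bo_def by (rule Least_le) (rule assms)
  have ne: "bo m k \<noteq> 0" using L by (metis off_1 not_less0)
  then obtain i' where i': "bo m k = Suc i'" by (cases "bo m k") auto
  have "\<not> k < off m (Suc i')" unfolding bo_def
    by (rule not_less_Least) (use i' in \<open>simp add: bo_def\<close>)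
  then show ?thesis using L le ne i' by auto
qed

lemma bo_eq:
  assumes "1 \<le> i" "j < m i"
  shows "bo m (off m i + j) = i"
  unfolding bo_def
proof (rule Least_equality)
  show "off m i + j < off m (Suc i)" using assms by (simp add: off_Suc)
  fix i' assume a: "off m i + j < off m (Suc i')"
  show "i \<le> i'"
  proof (rule ccontr)
    assume "\<not> i \<le> i'"
    then have "off m (Suc i') \<le> off m i" by (intro off_mono) auto
    then show False using a by simp
  qed
qed

lemma blk_Qn:
  assumes "zs \<in> Qn q (off m (Suc n))" "1 \<le> i" "i \<le> n"
  shows "blk m i zs \<in> Qn q (m i)"
proof -
  have "off m i + m i \<le> off m (Suc n)"
    using assms off_mono[of "Suc i" "Suc n" m] by (simp add: off_Suc)
  then show ?thesis using assms(1) unfolding Qn_def blk_def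
    by (auto dest: in_set_takeD in_set_dropD)
qed

lemma blk_ext:
  assumes "length a = off m (Suc n)" "length b = off m (Suc n)"
    and "\<forall>i\<in>{1..n}. blk m i a = blk m i b"
  shows "a = b"
proof (rule nth_equalityI)
  show "length a = length b" using assms by simp
  fix k assume k: "k < length a"
  define i where "i = bo m k"
  have P: "1 \<le> i \<and> i \<le> n \<and> off m i \<le> k \<and> k < off m (Suc i)"
    using bo_props[of k m n] k assms(1) by (simp add: i_def)
  define j where "j = k - off m i"
  have kj: "k = off m i + j" using P by (simp add: j_def)
  have os: "off m (Suc i) = off m i + m i" using P off_Suc by blast
  have jl: "j < length (blk m i a)" using P k assms(1) os by (simp add: length_blk j_def) arith
  have jl2: "j < length (blk m i b)" using P k assms os by (simp add: length_blk j_def) arith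
  have "blk m i a ! j = blk m i b ! j" using assms(3) P by auto
  then show "a ! k = b ! k" using nth_blk[OF jl] nth_blk[OF jl2] kj by simp
qed

lemma assemble:
  assumes "\<forall>i\<in>{1..n}. isotopism q (m i) (\<pi> i)"
  shows "\<exists>T. isotopism q (off m (Suc n)) T \<and>
     (\<forall>zs. \<forall>i\<in>{1..n}. blk m i (iso_apply T zs) = iso_apply (\<pi> i) (blk m i zs))"
proof -
  define T where "T k = \<pi> (bo m k) (k - off m (bo m k))" for k
  have iso: "isotopism q (off m (Suc n)) T"
    unfolding isotopism_def
  proof (intro allI impI)
    fix k assume k: "k < off m (Suc n)"
    note P = bo_props[OF k]
    then have "k - off m (bo m k) < m (bo m k)" using off_Suc[of "bo m k" m] by auto
    then show "bij_betw (T k) {..<q} {..<q}" using assms P unfolding T_def isotopism_def by auto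
  qed
  have "blk m i (iso_apply T zs) = iso_apply (\<pi> i) (blk m i zs)" if i: "i \<in> {1..n}" for zs i
    unfolding blk_iso
  proof (rule iso_cong)
    fix j assume "j < length (blk m i zs)"
    then have "j < m i" by (simp add: length_blk)
    then show "T (off m i + j) (blk m i zs ! j) = \<pi> i j (blk m i zs ! j)"
      using i bo_eq[of i j m] by (simp add: T_def)
  qed
  then show ?thesis using iso by blast
qed



lemma iso_comp: "iso_apply (\<lambda>j. A j \<circ> B j) z = iso_apply A (iso_apply B z)"
  by (rule nth_equalityI) auto

lemma transl:
  fixes G :: "(nat, 'b) monoid_scheme"
  assumes grp: "group G" and cq: "carrier G = {..<q}" and u: "u \<in> Qn q k" and w: "w \<in> Qn q k"
    and eq: "foldr (mult G) u \<one>\<^bsub>G\<^esub> = foldr (mult G) w \<one>\<^bsub>G\<^esub>"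
  shows "\<exists>\<rho>. isotopism q k \<rho> \<and> (\<forall>z\<in>Qn q k. foldr (mult G) (iso_apply \<rho> z) \<one>\<^bsub>G\<^esub> = foldr (mult G) z \<one>\<^bsub>G\<^esub>)
           \<and> iso_apply \<rho> u = w"
proof -
  interpret group G by (rule grp)
  define P where "P z j = foldr (mult G) (take j z) \<one>\<^bsub>G\<^esub>" for z j
  have Qc: "set z \<subseteq> carrier G" if "z \<in> Qn q k" for z using that cq by (auto simp: Qn_def)
  have zc: "z ! j \<in> carrier G" if "z \<in> Qn q k" "j < k" for z j
    using Qc[OF that(1)] that by (auto simp: Qn_def)
  have Pc: "P z j \<in> carrier G" if "z \<in> Qn q k" for z j
    unfolding P_def using Qc[OF that] by (intro foldr_closed) (auto dest: in_set_takeD)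
  have PS: "P z (Suc j) = P z j \<otimes>\<^bsub>G\<^esub> z ! j" if "z \<in> Qn q k" "j < k" for z j
  proof -
    have l: "j < length z" using that by (simp add: Qn_def)
    have s: "set (take j z) \<subseteq> carrier G" using Qc[OF that(1)] by (auto dest: in_set_takeD)
    have "P z (Suc j) = foldr (mult G) (take j z @ [z ! j]) \<one>\<^bsub>G\<^esub>"
      unfolding P_def by (subst take_Suc_conv_app_nth[OF l]) (rule refl)
    also have "\<dots> = P z j \<otimes>\<^bsub>G\<^esub> z ! j" unfolding P_def by (rule foldr_snoc[OF s zc[OF that]])
    finally show ?thesis .
  qed
  have P0: "P z 0 = \<one>\<^bsub>G\<^esub>" for z by (simp add: P_def)
  have Pk: "P z k = foldr (mult G) z \<one>\<^bsub>G\<^esub>" if "z \<in> Qn q k" for z using that by (simp add: P_def Qn_def)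
  define a where "a j = inv\<^bsub>G\<^esub> (P u j) \<otimes>\<^bsub>G\<^esub> P w j" for j
  have ac: "a j \<in> carrier G" for j using Pc u w by (simp add: a_def)
  define \<rho> where "\<rho> j v = inv\<^bsub>G\<^esub> (a j) \<otimes>\<^bsub>G\<^esub> v \<otimes>\<^bsub>G\<^esub> a (Suc j)" for j v
  have iso: "isotopism q k \<rho>"
    unfolding isotopism_def \<rho>_def
  proof (intro allI impI)
    fix i
    show "bij_betw (\<lambda>v. inv\<^bsub>G\<^esub> (a i) \<otimes>\<^bsub>G\<^esub> v \<otimes>\<^bsub>G\<^esub> a (Suc i)) {..<q} {..<q}"
      using bij_transl[of "inv\<^bsub>G\<^esub> (a i)" "a (Suc i)"] ac inv_closed[OF ac[of i]] cq by simp
  qed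
  have \<rho>u: "iso_apply \<rho> u = w"
  proof (rule nth_equalityI)
    show "length (iso_apply \<rho> u) = length w" using u w by (simp add: Qn_def)
    fix j assume "j < length (iso_apply \<rho> u)"
    then have j: "j < k" using u by (simp add: Qn_def)
    have "\<rho> j (u ! j) = w ! j"
      unfolding \<rho>_def a_def using PS[OF u j] PS[OF w j] Pc[OF u] Pc[OF w] zc[OF u j] zc[OF w j]
      by (simp add: inv_mult_group m_assoc cancel1 cancel2)
    then show "iso_apply \<rho> u ! j = w ! j" using j u by (simp add: Qn_def)
  qed
  have ak: "a k = \<one>\<^bsub>G\<^esub>" unfolding a_def using Pk[OF u] Pk[OF w] eq Pc[OF w, of k] by (metis l_inv)
  have pres: "foldr (mult G) (iso_apply \<rho> z) \<one>\<^bsub>G\<^esub> = foldr (mult G) z \<one>\<^bsub>G\<^esub>" if z: "z \<in> Qn q k" for z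
  proof -
    have iz: "iso_apply \<rho> z \<in> Qn q k" by (rule iso_Qn[OF iso z])
    have "j \<le> k \<Longrightarrow> P (iso_apply \<rho> z) j = P z j \<otimes>\<^bsub>G\<^esub> a j" for j
    proof (induction j)
      case 0 then show ?case by (simp add: P0 a_def)
    next
      case (Suc j)
      then have j: "j < k" by simp
      have "P (iso_apply \<rho> z) (Suc j) = P (iso_apply \<rho> z) j \<otimes>\<^bsub>G\<^esub> iso_apply \<rho> z ! j"
        by (rule PS[OF iz j])
      also have "\<dots> = (P z j \<otimes>\<^bsub>G\<^esub> a j) \<otimes>\<^bsub>G\<^esub> (inv\<^bsub>G\<^esub> (a j) \<otimes>\<^bsub>G\<^esub> z ! j \<otimes>\<^bsub>G\<^esub> a (Suc j))"
        using Suc j z by (simp add: Qn_def) (simp add: \<rho>_def)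
      also have "\<dots> = P z (Suc j) \<otimes>\<^bsub>G\<^esub> a (Suc j)"
        using PS[OF z j] Pc[OF z] ac zc[OF z j] by (simp add: m_assoc cancel1)
      finally show ?case .
    qed
    moreover have "foldr (mult G) z \<one>\<^bsub>G\<^esub> \<in> carrier G" by (rule foldr_closed[OF Qc[OF z]]) simp
    ultimately show ?thesis using Pk[OF z] Pk[OF iz] ak by simp
  qed
  show ?thesis using iso pres \<rho>u by blast
qed



theorem mainTheorem9:
  fixes q n :: nat and m :: "nat \<Rightarrow> nat"
    and h :: "nat \<Rightarrow> nat list \<Rightarrow> nat" and f :: "nat list \<Rightarrow> nat"
  assumes "n \<ge> 2"
    and "\<forall>i\<in>{1..n}. m i \<ge> 1"
    and "\<forall>i\<in>{1..n}. iterated_group q (m i) (h i)"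
    and "iso_transitive_quasigroup q n f"
    and "\<forall>i\<in>{1..n}. \<forall>\<sigma>\<in>autotopy_group q (n + 1) (qgraph q n f).
           \<exists>\<tau>. isotopism q (m i) \<tau> \<and>
               (\<forall>z\<in>Qn q (m i). h i (iso_apply \<tau> z) = \<sigma> i (h i z))"
  shows "iso_transitive_quasigroup q (\<Sum>i=1..n. m i) (compose_qg n f h m)"
proof -
  define M where "M = off m (Suc n)"
  have MS: "(\<Sum>i=1..n. m i) = M" by (simp add: M_def off_n)
  have "\<forall>i\<in>{1..n}. \<exists>op. group \<lparr>carrier = {..<q}, mult = op, one = 0\<rparr> \<and>
           (\<forall>zs\<in>Qn q (m i). h i zs = foldr op zs 0)"
    using assms(3) by (simp add: iterated_group_def)
  then obtain ops where ops: "\<forall>i\<in>{1..n}. group \<lparr>carrier = {..<q}, mult = ops i, one = 0\<rparr> \<and>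
           (\<forall>zs\<in>Qn q (m i). h i zs = foldr (ops i) zs 0)"
    by (metis (no_types) bchoice)
  define GG where "GG i = \<lparr>carrier = {..<q}, mult = ops i, one = (0::nat)\<rparr>" for i
  have grp: "group (GG i)" if "i \<in> {1..n}" for i using ops that by (simp add: GG_def)
  have hf: "h i z = foldr (mult (GG i)) z (one (GG i))" if "i \<in> {1..n}" "z \<in> Qn q (m i)" for i z
    using ops that by (simp add: GG_def)
  have hr: "h i z < q" if i: "i \<in> {1..n}" and z: "z \<in> Qn q (m i)" for i z
  proof -
    interpret group "GG i" by (rule grp[OF i])
    have "set z \<subseteq> carrier (GG i)" using z by (auto simp: Qn_def GG_def)
    then have "foldr (mult (GG i)) z \<one>\<^bsub>GG i\<^esub> \<in> carrier (GG i)" by (intro foldr_closed) auto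
    then show ?thesis using hf[OF i z] by (simp add: GG_def)
  qed
  define args where "args zs = map (\<lambda>i. h i (blk m i zs)) [1..<n+1]" for zs
  have args_len[simp]: "length (args zs) = n" for zs by (simp add: args_def)
  have args_nth: "args zs ! r = h (Suc r) (blk m (Suc r) zs)" if "r < n" for zs r
    using that by (simp add: args_def del: upt_Suc)
  have args_Qn: "args zs \<in> Qn q n" if zs: "zs \<in> Qn q M" for zs
  proof -
    have "args zs ! r < q" if r: "r < n" for r
      using hr[of "Suc r" "blk m (Suc r) zs"] blk_Qn[of zs q m n "Suc r"] zs r
      by (simp add: args_nth M_def)
    then show ?thesis by (auto simp: Qn_def in_set_conv_nth)
  qed
  define g where "g = compose_qg n f h m"
  have g_eq: "g zs = f (args zs)" for zs by (simp add: g_def compose_blk args_def)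
  have fq: "is_quasigroup q n f" and ftr: "isotopically_transitive q (n + 1) (qgraph q n f)"
    using assms(4) by (auto simp: iso_transitive_quasigroup_def)
  have fr: "f xs < q" if "xs \<in> Qn q n" for xs using fq that by (auto simp: is_quasigroup_def)
  have gr: "g zs < q" if "zs \<in> Qn q M" for zs using fr[OF args_Qn[OF that]] by (simp add: g_eq)
  have gQ: "g zs # zs \<in> Qn q (Suc M)" if "zs \<in> Qn q M" for zs
    using gr[OF that] that by (auto simp: Qn_def)
  have lenM: "length zs = M" if "zs \<in> Qn q M" for zs using that by (simp add: Qn_def)
  have blkQ: "blk m i zs \<in> Qn q (m i)" if "zs \<in> Qn q M" "i \<in> {1..n}" for zs i
    using blk_Qn[of zs q m n i] that by (simp add: M_def)
  have blk_len: "length (blk m i zs) = m i" if "zs \<in> Qn q M" "i \<in> {1..n}" for zs i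
    using blkQ[OF that] by (simp add: Qn_def)
  have offb: "off m i + m i \<le> M" if "i \<in> {1..n}" for i
    using that off_mono[of "Suc i" "Suc n" m] off_Suc[of i m] by (simp add: M_def)

  have quasi: "is_quasigroup q M g"
    unfolding is_quasigroup_def
  proof (intro conjI ballI impI)
    fix zs assume "zs \<in> Qn q M" then show "g zs \<in> {..<q}" using gr by simp
  next
    fix zs ws assume zs: "zs \<in> Qn q M" and ws: "ws \<in> Qn q M"
      and c: "card {i. i < M \<and> zs ! i \<noteq> ws ! i} = 1"
    then obtain k where S: "{i. i < M \<and> zs ! i \<noteq> ws ! i} = {k}" using card_1_singletonE[OF c] by blast
    then have kM: "k < M" and dk: "zs ! k \<noteq> ws ! k" by auto
    have oth: "zs ! k' = ws ! k'" if "k' < M" "k' \<noteq> k" for k'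
      using S that by blast
    define i where "i = bo m k"
    have P: "1 \<le> i \<and> i \<le> n \<and> off m i \<le> k \<and> k < off m (Suc i)"
      using bo_props[of k m n] kM by (simp add: i_def M_def)
    then have iI: "i \<in> {1..n}" by simp
    define p where "p = k - off m i"
    have kp: "k = off m i + p" using P by (simp add: p_def)
    have pm: "p < m i" using P off_Suc[of i m] by (simp add: p_def) arith
    have same: "blk m r zs = blk m r ws" if r: "r \<in> {1..n}" "r \<noteq> i" for r
    proof (rule nth_equalityI)
      show "length (blk m r zs) = length (blk m r ws)" using blk_len zs ws r by simp
      fix j assume j: "j < length (blk m r zs)"
      then have jm: "j < m r" using blk_len[OF zs r(1)] by simp
      have jl2: "j < length (blk m r ws)" using blk_len[OF ws r(1)] jm by simp
      have "bo m (off m r + j) = r" using bo_eq[of r j m] r jm by simp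
      then have ne: "off m r + j \<noteq> k" using r(2) i_def by auto
      have "off m r + j < M" using offb[OF r(1)] jm by simp
      then show "blk m r zs ! j = blk m r ws ! j"
        using nth_blk[OF j] nth_blk[OF jl2] oth ne by simp
    qed
    have diff: "h i (blk m i zs) \<noteq> h i (blk m i ws)"
    proof -
      interpret group "GG i" by (rule grp[OF iI])
      have cu: "set (blk m i zs) \<subseteq> carrier (GG i)" using blkQ[OF zs iI] by (auto simp: Qn_def GG_def)
      have cv: "set (blk m i ws) \<subseteq> carrier (GG i)" using blkQ[OF ws iI] by (auto simp: Qn_def GG_def)
      have lu: "length (blk m i zs) = m i" using blk_len[OF zs iI] .
      have lv: "length (blk m i ws) = m i" using blk_len[OF ws iI] .
      have "foldr (mult (GG i)) (blk m i zs) \<one>\<^bsub>GG i\<^esub> \<noteq> foldr (mult (GG i)) (blk m i ws) \<one>\<^bsub>GG i\<^esub>"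
      proof (rule foldr_differ[OF cu cv])
        show "length (blk m i ws) = length (blk m i zs)" using lu lv by simp
        show "p < length (blk m i zs)" using lu pm by simp
        show "\<forall>j<length (blk m i zs). j \<noteq> p \<longrightarrow> blk m i zs ! j = blk m i ws ! j"
        proof (intro allI impI)
          fix j assume j: "j < length (blk m i zs)" "j \<noteq> p"
          have jl2: "j < length (blk m i ws)" using j lu lv by simp
          have "off m i + j < M" using offb[OF iI] j lu by simp
          moreover have "off m i + j \<noteq> k" using kp j by simp
          ultimately show "blk m i zs ! j = blk m i ws ! j"
            using nth_blk[OF j(1)] nth_blk[OF jl2] oth by simp
        qed
        have pl2: "p < length (blk m i ws)" using lv pm by simp
        show "blk m i zs ! p \<noteq> blk m i ws ! p"
          using nth_blk[of p m i zs] nth_blk[OF pl2] lu pm dk kp by simp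
      qed
      then show ?thesis using hf[OF iI blkQ[OF zs iI]] hf[OF iI blkQ[OF ws iI]] by simp
    qed
    have "{r. r < n \<and> args zs ! r \<noteq> args ws ! r} = {i - 1}"
    proof (rule Set.set_eqI, rule iffI)
      fix r assume "r \<in> {r. r < n \<and> args zs ! r \<noteq> args ws ! r}"
      then have r: "r < n" and d: "args zs ! r \<noteq> args ws ! r" by auto
      have "Suc r = i"
      proof (rule ccontr)
        assume "Suc r \<noteq> i"
        then have "blk m (Suc r) zs = blk m (Suc r) ws" using same[of "Suc r"] r by simp
        then show False using d r by (simp add: args_nth)
      qed
      then show "r \<in> {i - 1}" by auto
    next
      fix r assume "r \<in> {i - 1}"
      then have r: "r = i - 1" by simp
      then have "Suc r = i" "r < n" using P by auto
      then show "r \<in> {r. r < n \<and> args zs ! r \<noteq> args ws ! r}" using diff by (simp add: args_nth)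
    qed
    then have "card {r. r < n \<and> args zs ! r \<noteq> args ws ! r} = 1" by simp
    then have "f (args zs) \<noteq> f (args ws)"
      using fq args_Qn[OF zs] args_Qn[OF ws] unfolding is_quasigroup_def by blast
    then show "g zs \<noteq> g ws" by (simp add: g_eq)
  qed

  have trans: "isotopically_transitive q (Suc M) (qgraph q M g)"
    unfolding isotopically_transitive_def
  proof (intro ballI)
    fix X Y assume X: "X \<in> qgraph q M g" and Y: "Y \<in> qgraph q M g"
    obtain zs where zs: "zs \<in> Qn q M" and Xe: "X = g zs # zs" using X by (auto simp: qgraph_def)
    obtain ws where ws: "ws \<in> Qn q M" and Ye: "Y = g ws # ws" using Y by (auto simp: qgraph_def)
    define xs where "xs = args zs"
    define ys where "ys = args ws"
    have xsQ: "xs \<in> Qn q n" and ysQ: "ys \<in> Qn q n" using args_Qn zs ws by (auto simp: xs_def ys_def)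
    have "f xs # xs \<in> qgraph q n f" "f ys # ys \<in> qgraph q n f"
      using xsQ ysQ by (auto simp: qgraph_def)
    then obtain \<sigma> where \<sigma>G: "\<sigma> \<in> autotopy_group q (n + 1) (qgraph q n f)"
      and \<sigma>e: "iso_apply \<sigma> (f xs # xs) = f ys # ys"
      using ftr unfolding isotopically_transitive_def by blast
    have \<sigma>iso: "isotopism q (n + 1) \<sigma>" and \<sigma>img: "iso_apply \<sigma> ` qgraph q n f = qgraph q n f"
      using \<sigma>G by (auto simp: autotopy_group_def)
    have \<sigma>0: "\<sigma> 0 (f xs) = f ys" and \<sigma>t: "iso_apply (\<lambda>k. \<sigma> (Suc k)) xs = ys"
      using \<sigma>e by (auto simp: iso_Cons)
    have \<sigma>blk: "\<sigma> i (h i (blk m i zs)) = h i (blk m i ws)" if i: "i \<in> {1..n}" for i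
    proof -
      obtain r where r: "i = Suc r" "r < n" using i by (cases i) auto
      have "iso_apply (\<lambda>k. \<sigma> (Suc k)) xs ! r = ys ! r" using \<sigma>t by simp
      then show ?thesis using r xsQ by (simp add: Qn_def xs_def ys_def args_nth)
    qed
    have \<sigma>f: "\<sigma> 0 (f xs') = f (iso_apply (\<lambda>k. \<sigma> (Suc k)) xs')" if xs': "xs' \<in> Qn q n" for xs'
    proof -
      have "f xs' # xs' \<in> qgraph q n f" using xs' by (auto simp: qgraph_def)
      then have "iso_apply \<sigma> (f xs' # xs') \<in> qgraph q n f" using \<sigma>img by blast
      then show ?thesis by (auto simp: qgraph_def iso_Cons)
    qed
    have "\<forall>i\<in>{1..n}. \<exists>\<tau>. isotopism q (m i) \<tau> \<and> (\<forall>z\<in>Qn q (m i). h i (iso_apply \<tau> z) = \<sigma> i (h i z))"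
      using assms(5) \<sigma>G by blast
    then obtain tau where tau: "\<forall>i\<in>{1..n}. isotopism q (m i) (tau i) \<and>
        (\<forall>z\<in>Qn q (m i). h i (iso_apply (tau i) z) = \<sigma> i (h i z))"
      by (metis (no_types) bchoice)
    have "\<forall>i\<in>{1..n}. \<exists>\<rho>. isotopism q (m i) \<rho> \<and> (\<forall>z\<in>Qn q (m i). h i (iso_apply \<rho> z) = h i z)
             \<and> iso_apply \<rho> (iso_apply (tau i) (blk m i zs)) = blk m i ws"
    proof
      fix i assume iI: "i \<in> {1..n}"
      have u: "iso_apply (tau i) (blk m i zs) \<in> Qn q (m i)"
        using iso_Qn tau iI blkQ[OF zs iI] by blast
      have w: "blk m i ws \<in> Qn q (m i)" using blkQ[OF ws iI] .
      have e: "h i (iso_apply (tau i) (blk m i zs)) = h i (blk m i ws)"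
        using tau iI blkQ[OF zs iI] \<sigma>blk[OF iI] by simp
      have "\<exists>\<rho>. isotopism q (m i) \<rho> \<and> (\<forall>z\<in>Qn q (m i). foldr (mult (GG i)) (iso_apply \<rho> z) \<one>\<^bsub>GG i\<^esub> = foldr (mult (GG i)) z \<one>\<^bsub>GG i\<^esub>)
           \<and> iso_apply \<rho> (iso_apply (tau i) (blk m i zs)) = blk m i ws"
        by (rule transl[OF grp[OF iI] _ u w]) (use e hf[OF iI u] hf[OF iI w] in \<open>auto simp: GG_def\<close>)
      then obtain \<rho> where \<rho>: "isotopism q (m i) \<rho>"
        "\<forall>z\<in>Qn q (m i). foldr (mult (GG i)) (iso_apply \<rho> z) \<one>\<^bsub>GG i\<^esub> = foldr (mult (GG i)) z \<one>\<^bsub>GG i\<^esub>"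
        "iso_apply \<rho> (iso_apply (tau i) (blk m i zs)) = blk m i ws" by blast
      have "\<forall>z\<in>Qn q (m i). h i (iso_apply \<rho> z) = h i z"
        using \<rho>(2) hf[OF iI] iso_Qn[OF \<rho>(1)] by auto
      then show "\<exists>\<rho>. isotopism q (m i) \<rho> \<and> (\<forall>z\<in>Qn q (m i). h i (iso_apply \<rho> z) = h i z)
             \<and> iso_apply \<rho> (iso_apply (tau i) (blk m i zs)) = blk m i ws" using \<rho> by blast
    qed
    then obtain rho where rho: "\<forall>i\<in>{1..n}. isotopism q (m i) (rho i) \<and> (\<forall>z\<in>Qn q (m i). h i (iso_apply (rho i) z) = h i z)
             \<and> iso_apply (rho i) (iso_apply (tau i) (blk m i zs)) = blk m i ws"
      by (metis (no_types) bchoice)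
    define \<pi> where "\<pi> i j = rho i j \<circ> tau i j" for i j
    have \<pi>app: "iso_apply (\<pi> i) z = iso_apply (rho i) (iso_apply (tau i) z)" for i z
      unfolding \<pi>_def by (rule iso_comp)
    have \<pi>iso: "\<forall>i\<in>{1..n}. isotopism q (m i) (\<pi> i)"
      unfolding isotopism_def \<pi>_def
    proof (intro ballI allI impI)
      fix i j assume i: "i \<in> {1..n}" and j: "j < m i"
      have "bij_betw (tau i j) {..<q} {..<q}" "bij_betw (rho i j) {..<q} {..<q}"
        using rho tau i j unfolding isotopism_def by auto
      then show "bij_betw (rho i j \<circ> tau i j) {..<q} {..<q}" by (rule bij_betw_trans)
    qed
    have \<pi>h: "h i (iso_apply (\<pi> i) z) = \<sigma> i (h i z)" if "i \<in> {1..n}" "z \<in> Qn q (m i)" for i z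
      using rho tau that iso_Qn[of q "m i" "tau i" z] by (simp add: \<pi>app)
    have \<pi>u: "iso_apply (\<pi> i) (blk m i zs) = blk m i ws" if "i \<in> {1..n}" for i
      using rho that by (simp add: \<pi>app)
    obtain T where Tiso: "isotopism q M T"
      and Tblk: "\<forall>zs. \<forall>i\<in>{1..n}. blk m i (iso_apply T zs) = iso_apply (\<pi> i) (blk m i zs)"
      using assemble[OF \<pi>iso] unfolding M_def by blast
    define \<Phi> where "\<Phi> k = (if k = 0 then \<sigma> 0 else T (k - 1))" for k
    have \<Phi>app: "iso_apply \<Phi> (x # us) = \<sigma> 0 x # iso_apply T us" for x us
      by (simp add: iso_Cons \<Phi>_def)
    have \<Phi>iso: "isotopism q (Suc M) \<Phi>"
      unfolding isotopism_def
    proof (intro allI impI)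
      fix k assume k: "k < Suc M"
      show "bij_betw (\<Phi> k) {..<q} {..<q}"
      proof (cases k)
        case 0 then show ?thesis using \<sigma>iso by (simp add: \<Phi>_def isotopism_def)
      next
        case (Suc k') then show ?thesis using Tiso k by (simp add: \<Phi>_def isotopism_def)
      qed
    qed
    have argsT: "args (iso_apply T us) = iso_apply (\<lambda>k. \<sigma> (Suc k)) (args us)" if us: "us \<in> Qn q M" for us
    proof (rule nth_equalityI)
      show "length (args (iso_apply T us)) = length (iso_apply (\<lambda>k. \<sigma> (Suc k)) (args us))" by simp
      fix r assume "r < length (args (iso_apply T us))"
      then have r: "r < n" by simp
      have rI: "Suc r \<in> {1..n}" using r by simp
      show "args (iso_apply T us) ! r = iso_apply (\<lambda>k. \<sigma> (Suc k)) (args us) ! r"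
        using r Tblk rI \<pi>h[OF rI blkQ[OF us rI]] by (simp add: args_nth)
    qed
    have \<Phi>g: "iso_apply \<Phi> (g us # us) = g (iso_apply T us) # iso_apply T us" if us: "us \<in> Qn q M" for us
      using \<sigma>f[OF args_Qn[OF us]] argsT[OF us] by (simp add: \<Phi>app g_eq)
    have sub: "qgraph q M g \<subseteq> Qn q (Suc M)" using gQ by (auto simp: qgraph_def)
    have fin: "finite (qgraph q M g)"
    proof -
      have "qgraph q M g = (\<lambda>xs. g xs # xs) ` Qn q M" by (auto simp: qgraph_def)
      then show ?thesis using finite_Qn by simp
    qed
    have img: "iso_apply \<Phi> ` qgraph q M g = qgraph q M g"
    proof (rule endo_inj_surj[OF fin])
      show "iso_apply \<Phi> ` qgraph q M g \<subseteq> qgraph q M g"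
      proof
        fix Z assume "Z \<in> iso_apply \<Phi> ` qgraph q M g"
        then obtain us where us: "us \<in> Qn q M" and Ze: "Z = iso_apply \<Phi> (g us # us)"
          by (auto simp: qgraph_def)
        have "iso_apply T us \<in> Qn q M" by (rule iso_Qn[OF Tiso us])
        then show "Z \<in> qgraph q M g" using Ze \<Phi>g[OF us] by (auto simp: qgraph_def)
      qed
      show "inj_on (iso_apply \<Phi>) (qgraph q M g)"
        by (rule inj_on_subset[OF iso_inj[OF \<Phi>iso] sub])
    qed
    have \<Phi>A: "\<Phi> \<in> autotopy_group q (Suc M) (qgraph q M g)"
      using \<Phi>iso img by (simp add: autotopy_group_def)
    have Tz: "iso_apply T zs = ws"
    proof (rule blk_ext[of _ m n])
      show "length (iso_apply T zs) = off m (Suc n)" using zs by (simp add: Qn_def M_def)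
      show "length ws = off m (Suc n)" using ws by (simp add: Qn_def M_def)
      show "\<forall>i\<in>{1..n}. blk m i (iso_apply T zs) = blk m i ws" using Tblk \<pi>u by simp
    qed
    have "g (iso_apply T zs) = g ws" using Tz by simp
    then have "iso_apply \<Phi> X = Y" using \<Phi>g[OF zs] Tz Xe Ye by simp
    then show "\<exists>\<tau>\<in>autotopy_group q (Suc M) (qgraph q M g). iso_apply \<tau> X = Y" using \<Phi>A by blast
  qed
  show ?thesis unfolding MS iso_transitive_quasigroup_def g_def[symmetric]
    using quasi trans by simp
qed
end
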